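(* Consider the scheme described in the context, with $\mu_f,\mu_{g^*}\ge0$ valid strong convexity moduli of $f$ and $g^*$, and let $k\ge1$. Suppose $\tau_{k-1},\tau_k\in(0,1]$ satisfy $$\begin{cases}(L_{k-1}+\mu_f)(1-\tau_k)\tau_{k-1}^2+\mu_f(1-\tau_k)\tau_k\ \ge\ L_k\tau_k^2,\\ (L_{k-1}+\mu_f)(L_k+\mu_f)\tau_k\tau_{k-1}^2+(L_k+\mu_f)^2\tau_k^2\ \ge\ (L_{k-1}+\mu_f)L_k\tau_{k-1}^2.\end{cases}$$ Then for every $x\in\mathrm{dom} f$, $\mathcal{V}_{k+1}(x)\le(1-\tau_k)\mathcal{V}_k(x)$.
   Context: Setting: $f:\mathbb{R}^p\to\mathbb{R}\cup\{+\infty\}$, $g:\mathbb{R}^n\to\mathbb{R}\cup\{+\infty\}$ proper closed convex, $K\in\mathbb{R}^{n\times p}$ with $K\neq0$, $\|K\|$ its operator (spectral) norm; $g^*$ Fenchel conjugate of $g$; $\mathcal{L}(x,y):=f(x)+\langle Kx,y\rangle-g^*(y)$. $f$ is $\mu_f$-strongly convex means $f-\tfrac{\mu_f}{2}\|\cdot\|^2$ is convex ($\mu_f=0$ allowed); similarly for $g^*$ with $\mu_{g^*}$. $\mathrm{prox}_{\gamma h}(x):=\arg\min_z\{h(z)+\tfrac1{2\gamma}\|z-x\|^2\}$. For $\beta>0$: $g_\beta(u,\dot y):=\max_y\{\langle u,y\rangle-g^*(y)-\tfrac\beta2\|y-\dot y\|^2\}$ and $F_\beta(x,\dot y):=f(x)+g_\beta(Kx,\dot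 y)$. Scheme: given $x^0\in\mathrm{dom} f$, $\tilde y^0\in\mathrm{dom}\,g^*$, $\dot y\in\mathbb{R}^n$, $\beta_0>0$, and a sequence $\{\tau_k\}_{k\ge0}\subset(0,1]$, set $\hat x^0:=x^0$, $\beta_k:=\beta_{k-1}/(1+\tau_k)$ for $k\ge1$, $L_k:=\|K\|^2/(\beta_k+\mu_{g^*})$, $m_{k+1}:=(L_{k+1}+\mu_f)/(L_k+\mu_f)$, $\eta_{k+1}:=\frac{(1-\tau_k)\tau_k}{\tau_k^2+m_{k+1}\tau_{k+1}}$, and for $k\ge0$: $y^{k+1}:=\mathrm{prox}_{g^*/\beta_k}(\dot y+\tfrac1{\beta_k}K\hat x^k)$, $x^{k+1}:=\mathrm{prox}_{f/L_k}(\hat x^k-\tfrac1{L_k}K^\top y^{k+1})$, $\hat x^{k+1}:=x^{k+1}+\eta_{k+1}(x^{k+1}-x^k)$, $\tilde y^{k+1}:=(1-\tau_k)\tilde y^k+\tau_k y^{k+1}$. Lyapunov function, for $k\ge1$ and $x\in\mathrm{dom} f$: $\mathcal{V}_k(x):=F_{\beta_{k-1}}(x^k,\dot y)-\mathcal{L}(x,\tilde y^k)+\tfrac{(L_{k-1}+\mu_f)\tau_{k-1}^2}{2}\big\|\tfrac1{\tau_{k-1}}[x^k-(1-\tau_{k-1})x^{k-1}]-x\big\|^2$. *)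

theory Defs
  imports "HOL-Analysis.Analysis"
begin

definition dom_e :: "('a \<Rightarrow> ereal) \<Rightarrow> 'a set" where
  "dom_e h = {x. h x < \<infinity>}"

definition proper_e :: "('a \<Rightarrow> ereal) \<Rightarrow> bool" where
  "proper_e h \<longleftrightarrow> (\<forall>x. h x \<noteq> -\<infinity>) \<and> (\<exists>x. h x \<noteq> \<infinity>)"

definition epigraph_e :: "('a \<Rightarrow> ereal) \<Rightarrow> ('a \<times> real) set" where
  "epigraph_e h = {(x, t). h x \<le> ereal t}"

definition convex_e :: "('a::real_vector \<Rightarrow> ereal) \<Rightarrow> bool" where
  "convex_e h \<longleftrightarrow> convex (epigraph_e h)"

definition closed_e :: "('a::topological_space \<Rightarrow> ereal) \<Rightarrow> bool" where
  "closed_e h \<longleftrightarrow> closed (epigraph_e h)"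

definition pcc :: "('a::real_normed_vector \<Rightarrow> ereal) \<Rightarrow> bool" where
  "pcc h \<longleftrightarrow> proper_e h \<and> closed_e h \<and> convex_e h"

definition strongly_convex_e :: "('a::real_normed_vector \<Rightarrow> ereal) \<Rightarrow> real \<Rightarrow> bool" where
  "strongly_convex_e h \<mu> \<longleftrightarrow> convex_e (\<lambda>x. h x - ereal (\<mu> / 2 * (norm x)\<^sup>2))"

definition fconj :: "('a::real_inner \<Rightarrow> ereal) \<Rightarrow> 'a \<Rightarrow> ereal" where
  "fconj g y = (SUP u. ereal (inner u y) - g u)"

definition prox :: "real \<Rightarrow> ('a::real_normed_vector \<Rightarrow> ereal) \<Rightarrow> 'a \<Rightarrow> 'a" where
  "prox \<gamma> h v = (THE z. \<forall>w. h z + ereal (1 / (2 * \<gamma>) * (norm (z - v))\<^sup>2)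
                              \<le> h w + ereal (1 / (2 * \<gamma>) * (norm (w - v))\<^sup>2))"

definition lagr :: "(real^'p \<Rightarrow> ereal) \<Rightarrow> (real^'n \<Rightarrow> ereal) \<Rightarrow> real^'p^'n
                     \<Rightarrow> real^'p \<Rightarrow> real^'n \<Rightarrow> ereal" where
  "lagr f g K x y = f x + ereal (inner (K *v x) y) - fconj g y"

definition g_beta :: "('a::real_inner \<Rightarrow> ereal) \<Rightarrow> real \<Rightarrow> 'a \<Rightarrow> 'a \<Rightarrow> ereal" where
  "g_beta g \<beta> u yd = (SUP y. ereal (inner u y) - fconj g y - ereal (\<beta> / 2 * (norm (y - yd))\<^sup>2))"

definition F_beta :: "(real^'p \<Rightarrow> ereal) \<Rightarrow> (real^'n \<Rightarrow> ereal) \<Rightarrow> real^'p^'n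
                       \<Rightarrow> real \<Rightarrow> real^'p \<Rightarrow> real^'n \<Rightarrow> ereal" where
  "F_beta f g K \<beta> x yd = f x + g_beta g \<beta> (K *v x) yd"

fun beta_seq :: "real \<Rightarrow> (nat \<Rightarrow> real) \<Rightarrow> nat \<Rightarrow> real" where
  "beta_seq \<beta>0 \<tau> 0 = \<beta>0"
| "beta_seq \<beta>0 \<tau> (Suc k) = beta_seq \<beta>0 \<tau> k / (1 + \<tau> (Suc k))"

definition L_seq :: "real^'p^'n \<Rightarrow> real \<Rightarrow> (nat \<Rightarrow> real) \<Rightarrow> real \<Rightarrow> nat \<Rightarrow> real" where
  "L_seq K \<beta>0 \<tau> \<mu>g k = (onorm (\<lambda>x. K *v x))\<^sup>2 / (beta_seq \<beta>0 \<tau> k + \<mu>g)"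

definition eta_seq :: "real^'p^'n \<Rightarrow> real \<Rightarrow> (nat \<Rightarrow> real) \<Rightarrow> real \<Rightarrow> real \<Rightarrow> nat \<Rightarrow> real" where
  "eta_seq K \<beta>0 \<tau> \<mu>f \<mu>g k =
     (let m = (L_seq K \<beta>0 \<tau> \<mu>g (Suc k) + \<mu>f) / (L_seq K \<beta>0 \<tau> \<mu>g k + \<mu>f)
      in (1 - \<tau> k) * \<tau> k / ((\<tau> k)\<^sup>2 + m * \<tau> (Suc k)))"

text \<open>Lyapunov function V_k(x), meaningful for k >= 1\<close>
definition V_fun :: "(real^'p \<Rightarrow> ereal) \<Rightarrow> (real^'n \<Rightarrow> ereal) \<Rightarrow> real^'p^'n \<Rightarrow> real
    \<Rightarrow> (nat \<Rightarrow> real) \<Rightarrow> real \<Rightarrow> real \<Rightarrow> real^'n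
    \<Rightarrow> (nat \<Rightarrow> real^'p) \<Rightarrow> (nat \<Rightarrow> real^'n) \<Rightarrow> nat \<Rightarrow> real^'p \<Rightarrow> ereal" where
  "V_fun f g K \<beta>0 \<tau> \<mu>f \<mu>g yd xs yt k x =
     F_beta f g K (beta_seq \<beta>0 \<tau> (k - 1)) (xs k) yd - lagr f g K x (yt k)
     + ereal ((L_seq K \<beta>0 \<tau> \<mu>g (k - 1) + \<mu>f) * (\<tau> (k - 1))\<^sup>2 / 2 *
          (norm ((1 / \<tau> (k - 1)) *\<^sub>R (xs k - (1 - \<tau> (k - 1)) *\<^sub>R xs (k - 1)) - x))\<^sup>2)"

end

theory Submission
  imports Defs
begin



lemma norm_conv_sq:
  fixes x y :: "'a::real_inner"
  shows "(norm ((1-t)*\<^sub>R x + t*\<^sub>R y))\<^sup>2 = (1-t)*(norm x)\<^sup>2 + t*(norm y)\<^sup>2 - t*(1-t)*(norm (x-y))\<^sup>2"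
  by (simp add: power2_norm_eq_inner inner_add_left inner_add_right inner_diff_left inner_diff_right inner_commute algebra_simps)

lemma convex_e_ineq:
  assumes "convex_e \<phi>" "\<phi> x = ereal a" "\<phi> y = ereal b" "0 \<le> t" "t \<le> 1"
  shows "\<phi> ((1-t) *\<^sub>R x + t *\<^sub>R y) \<le> ereal ((1-t)*a + t*b)"
proof -
  have "(x,a) \<in> epigraph_e \<phi>" "(y,b) \<in> epigraph_e \<phi>" using assms by (auto simp: epigraph_e_def)
  then have "(1-t) *\<^sub>R (x,a) + t *\<^sub>R (y,b) \<in> epigraph_e \<phi>"
    using assms(1,4,5) unfolding convex_e_def by (intro convexD) auto
  thus ?thesis by (simp add: epigraph_e_def)
qed

lemma sconvex_e_ineq:
  fixes \<phi> :: "'a::real_inner \<Rightarrow> ereal"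
  assumes "strongly_convex_e \<phi> \<mu>" "\<phi> x = ereal a" "\<phi> y = ereal b" "0 \<le> t" "t \<le> 1"
  shows "\<phi> ((1-t) *\<^sub>R x + t *\<^sub>R y) \<le> ereal ((1-t)*a + t*b - \<mu>/2*t*(1-t)*(norm (x-y))\<^sup>2)"
proof -
  let ?z = "(1-t) *\<^sub>R x + t *\<^sub>R y"
  let ?\<psi> = "\<lambda>x. \<phi> x - ereal (\<mu> / 2 * (norm x)\<^sup>2)"
  have "?\<psi> ?z \<le> ereal ((1-t)*(a - \<mu> / 2 * (norm x)\<^sup>2) + t*(b - \<mu> / 2 * (norm y)\<^sup>2))"
    using assms unfolding strongly_convex_e_def by (intro convex_e_ineq) auto
  then have "\<phi> ?z \<le> ereal ((1-t)*(a - \<mu> / 2 * (norm x)\<^sup>2) + t*(b - \<mu> / 2 * (norm y)\<^sup>2) + \<mu> / 2 * (norm ?z)\<^sup>2)"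
    by (cases "\<phi> ?z") auto
  also have "\<dots> = ereal ((1-t)*a + t*b - \<mu>/2*t*(1-t)*(norm (x-y))\<^sup>2)"
    by (subst norm_conv_sq) (simp add: field_simps)
  finally show ?thesis .
qed

lemma le_of_eps:
  fixes A B C :: real
  assumes "\<And>t. 0 < t \<Longrightarrow> t < 1 \<Longrightarrow> A \<le> B + t * C" "C \<ge> 0"
  shows "A \<le> B"
proof (rule field_le_epsilon)
  fix e :: real assume e: "0 < e"
  define t where "t = min (1/2) (e / (C+1))"
  have t: "0 < t" "t < 1" using e assms(2) by (auto simp: t_def)
  have "t * C \<le> (e/(C+1)) * C" using assms(2) by (intro mult_right_mono) (auto simp: t_def)
  also have "\<dots> \<le> e" using e assms(2) by (simp add: field_simps)
  finally show "A \<le> B + e" using assms(1)[OF t] by linarith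
qed




lemma affine_minorant:
  fixes \<phi> :: "'a::euclidean_space \<Rightarrow> ereal"
  assumes cv: "convex_e \<phi>" and cl: "closed_e \<phi>" and x0: "\<phi> x0 = ereal c"
    and nm: "\<And>x. \<phi> x \<noteq> -\<infinity>"
  shows "\<exists>a b. \<forall>x. ereal (inner a x + b) \<le> \<phi> x"
proof -
  have "(x0, c - 1) \<notin> epigraph_e \<phi>" using x0 by (simp add: epigraph_e_def)
  then obtain A b where Ab: "inner A (x0, c - 1) < b" "\<forall>p\<in>epigraph_e \<phi>. inner A p > b"
    using separating_hyperplane_closed_point[of "epigraph_e \<phi>" "(x0, c - 1)"] cv cl
    unfolding convex_e_def closed_e_def by blast
  obtain a sa where A: "A = (a, sa)" by (cases A)
  have 1: "inner a x0 + sa * (c - 1) < b" using Ab(1) A by simp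
  have 2: "inner a x + sa * r > b" if "\<phi> x \<le> ereal r" for x r
    using Ab(2) that A by (auto simp: epigraph_e_def)
  have "inner a x0 + sa * c > b" using 2[of x0 c] x0 by simp
  with 1 have sa: "sa > 0" by (simp add: algebra_simps)
  show ?thesis
  proof (intro exI allI)
    fix x
    show "ereal (inner (- (1/sa) *\<^sub>R a) x + b / sa) \<le> \<phi> x"
    proof (cases "\<phi> x")
      case (real r)
      have "inner a x + sa * r > b" using 2[of x r] real by simp
      then have "(b - inner a x) / sa \<le> r" using sa by (simp add: field_simps)
      moreover have "inner (- (1/sa) *\<^sub>R a) x + b / sa = (b - inner a x) / sa"
        by (simp add: diff_divide_distrib)
      ultimately show ?thesis using real by simp
    next
      case PInf then show ?thesis by simp
    next
      case MInf then show ?thesis using nm by simp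
    qed
  qed
qed




lemma quad_bound:
  fixes r c N A :: real
  assumes "r \<ge> 0" "c > 0" "N \<ge> 0" "A \<ge> 0" "c * r\<^sup>2 \<le> N + A * r"
  shows "r \<le> 1 + (N + A) / c"
proof (cases "r \<le> 1")
  case True then show ?thesis using assms by (simp add: add_increasing2)
next
  case False
  have "c * r * r \<le> (N + A) * r"
    using assms False by (simp add: power2_eq_square algebra_simps) (smt (verit) mult_le_cancel_left1)
  then have "c * r \<le> N + A" using False by (simp add: mult_le_cancel_right)
  then have "r \<le> (N + A) / c" using assms by (simp add: field_simps)
  then show ?thesis by simp
qed

lemma prox_exists_min:
  fixes \<phi> :: "'a::euclidean_space \<Rightarrow> ereal"
  assumes cl: "closed_e \<phi>" and nm: "\<And>x. \<phi> x \<noteq> -\<infinity>" and x0: "\<phi> x0 = ereal c0"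
    and minor: "\<And>x. ereal (inner a x + b) \<le> \<phi> x" and cpos: "c > 0"
  shows "\<exists>z. \<forall>w. \<phi> z + ereal (c*(norm (z-v))\<^sup>2) \<le> \<phi> w + ereal (c*(norm (w-v))\<^sup>2)"
proof -
  define M where "M = c0 + c*(norm (x0-v))\<^sup>2"
  define T where "T = (\<lambda>p. (fst p, snd p - c*(norm (fst p - v))\<^sup>2)) -` epigraph_e \<phi> \<inter> {p. snd p \<le> M}"
  have memT: "(w, t) \<in> T \<longleftrightarrow> \<phi> w \<le> ereal (t - c*(norm (w-v))\<^sup>2) \<and> t \<le> M" for w t
    by (simp add: T_def epigraph_e_def)
  have "closed T"
    unfolding T_def
  proof (intro closed_Int continuous_closed_vimage)
    show "closed (epigraph_e \<phi>)" using cl by (simp add: closed_e_def)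
    show "continuous (at x) (\<lambda>p. (fst p, snd p - c * (norm (fst p - v))\<^sup>2))" for x
      by (intro continuous_intros)
    show "closed {p::'a\<times>real. snd p \<le> M}"
      by (intro closed_Collect_le continuous_intros)
  qed
  define N where "N = \<bar>M - b\<bar> + norm a * norm v"
  define R where "R = 1 + (N + norm a) / c"
  define lo where "lo = b - norm a * (R + norm v)"
  have bnd: "norm w \<le> R + norm v \<and> lo \<le> t \<and> t \<le> M" if "(w,t) \<in> T" for w t
  proof -
    have "\<phi> w \<le> ereal (t - c*(norm (w-v))\<^sup>2)" "t \<le> M" using that memT by auto
    then have "ereal (inner a w + b) \<le> ereal (t - c*(norm (w-v))\<^sup>2)" "t \<le> M"
      using minor[of w] by (meson order_trans)+
    then have 1: "inner a w + b + c*(norm (w-v))\<^sup>2 \<le> t" "t \<le> M" by auto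
    have "norm w \<le> norm (w - v) + norm v" using norm_triangle_ineq[of "w - v" v] by simp
    have ia: "inner a w \<ge> - (norm a * norm w)"
      using Cauchy_Schwarz_ineq2[of a w] by (simp add: abs_le_iff)
    have "- (norm a * norm w) \<ge> - (norm a * (norm (w - v) + norm v))"
      using \<open>norm w \<le> norm (w - v) + norm v\<close> by (simp add: mult_left_mono)
    with ia have ia2: "inner a w \<ge> - (norm a * norm (w - v)) - norm a * norm v"
      by (simp add: algebra_simps)
    have "c*(norm (w-v))\<^sup>2 \<le> N + norm a * norm (w-v)"
      using 1 ia2 unfolding N_def by linarith
    then have r: "norm (w-v) \<le> R" unfolding R_def
      by (intro quad_bound) (auto simp: cpos N_def)
    then have "norm w \<le> R + norm v" using \<open>norm w \<le> norm (w - v) + norm v\<close> by linarith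
    moreover have "- (norm a * norm w) \<ge> - (norm a * (R + norm v))"
      using \<open>norm w \<le> R + norm v\<close> by (simp add: mult_left_mono)
    moreover have "c*(norm (w-v))\<^sup>2 \<ge> 0" using cpos by simp
    ultimately show ?thesis using 1 ia unfolding lo_def by linarith
  qed
  have "bounded T"
  proof (rule bounded_subset)
    show "bounded (cball 0 (R + norm v) \<times> {lo..M})"
      by (intro bounded_Times bounded_cball bounded_closed_interval)
    show "T \<subseteq> cball 0 (R + norm v) \<times> {lo..M}"
      using bnd by auto
  qed
  with \<open>closed T\<close> have "compact T" by (simp add: compact_eq_bounded_closed)
  have "(x0, M) \<in> T" using x0 by (simp add: memT M_def)
  then have "T \<noteq> {}" by auto
  moreover have "continuous_on T snd" by (intro continuous_intros)
  ultimately obtain p where p: "p \<in> T" "\<And>q. q \<in> T \<Longrightarrow> snd p \<le> snd q"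
    using continuous_attains_inf[OF \<open>compact T\<close>, of snd] by blast
  obtain z tz where pz: "p = (z, tz)" by (cases p)
  have zT: "\<phi> z \<le> ereal (tz - c*(norm (z-v))\<^sup>2)" "tz \<le> M" using p(1) pz memT by auto
  have psiz: "\<phi> z + ereal (c*(norm (z-v))\<^sup>2) \<le> ereal tz"
    using zT(1) by (cases "\<phi> z") auto
  show ?thesis
  proof (intro exI allI)
    fix w
    show "\<phi> z + ereal (c*(norm (z-v))\<^sup>2) \<le> \<phi> w + ereal (c*(norm (w-v))\<^sup>2)"
    proof (cases "\<phi> w")
      case (real r)
      show ?thesis
      proof (cases "r + c*(norm (w-v))\<^sup>2 \<le> M")
        case True
        then have "(w, r + c*(norm (w-v))\<^sup>2) \<in> T" using real by (simp add: memT)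
        then have "tz \<le> r + c*(norm (w-v))\<^sup>2" using p(2) pz by fastforce
        then show ?thesis using psiz real by (auto intro: order_trans)
      next
        case False
        then have "tz \<le> r + c*(norm (w-v))\<^sup>2" using zT by linarith
        then show ?thesis using psiz real by (auto intro: order_trans)
      qed
    next
      case PInf then show ?thesis by simp
    next
      case MInf then show ?thesis using nm by simp
    qed
  qed
qed




lemma min_strong:
  fixes \<phi> :: "'a::real_inner \<Rightarrow> ereal"
  assumes sc: "strongly_convex_e \<phi> \<mu>" and mu: "\<mu> \<ge> 0" and cpos: "c > 0"
    and zmin: "\<And>w. \<phi> z + ereal (c*(norm (z-v))\<^sup>2) \<le> \<phi> w + ereal (c*(norm (w-v))\<^sup>2)"
    and fz: "\<phi> z = ereal a"
  shows "\<phi> z + ereal (c*(norm (z-v))\<^sup>2) + ereal ((c + \<mu>/2)*(norm (w-z))\<^sup>2) \<le> \<phi> w + ereal (c*(norm (w-v))\<^sup>2)"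
proof (cases "\<phi> w")
  case (real b)
  have "a + c*(norm (z-v))\<^sup>2 + (c + \<mu>/2)*(norm (w-z))\<^sup>2 \<le> b + c*(norm (w-v))\<^sup>2"
  proof (rule le_of_eps)
    show "0 \<le> (c + \<mu>/2)*(norm (w-z))\<^sup>2" using cpos mu by simp
    fix t :: real assume t: "0 < t" "t < 1"
    let ?zt = "(1-t) *\<^sub>R z + t *\<^sub>R w"
    have 1: "\<phi> ?zt \<le> ereal ((1-t)*a + t*b - \<mu>/2*t*(1-t)*(norm (z-w))\<^sup>2)"
      using sconvex_e_ineq[OF sc fz real] t by simp
    have 2: "\<phi> z + ereal (c*(norm (z-v))\<^sup>2) \<le> \<phi> ?zt + ereal (c*(norm (?zt-v))\<^sup>2)" by (rule zmin)
    have "?zt - v = (1-t) *\<^sub>R (z - v) + t *\<^sub>R (w - v)" by (simp add: algebra_simps)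
    then have n: "(norm (?zt-v))\<^sup>2 = (1-t)*(norm (z-v))\<^sup>2 + t*(norm (w-v))\<^sup>2 - t*(1-t)*(norm (z-w))\<^sup>2"
      using norm_conv_sq[of t "z-v" "w-v"] by simp
    have 3: "a + c*(norm (z-v))\<^sup>2 \<le> ((1-t)*a + t*b - \<mu>/2*t*(1-t)*(norm (z-w))\<^sup>2) + c*(norm (?zt-v))\<^sup>2"
    proof -
      have "ereal (a + c*(norm (z-v))\<^sup>2) \<le> \<phi> ?zt + ereal (c*(norm (?zt-v))\<^sup>2)" using 2 fz by simp
      also have "\<dots> \<le> ereal ((1-t)*a + t*b - \<mu>/2*t*(1-t)*(norm (z-w))\<^sup>2) + ereal (c*(norm (?zt-v))\<^sup>2)"
        using 1 by (intro add_right_mono)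
      finally show ?thesis by simp
    qed
    have nzw: "norm (z-w) = norm (w-z)" by (rule norm_minus_commute)
    have "t * (a + c*(norm (z-v))\<^sup>2 + (c + \<mu>/2)*(1-t)*(norm (w-z))\<^sup>2) \<le> t * (b + c*(norm (w-v))\<^sup>2)"
      using 3 unfolding n nzw by (simp add: algebra_simps)
    then have "a + c*(norm (z-v))\<^sup>2 + (c + \<mu>/2)*(1-t)*(norm (w-z))\<^sup>2 \<le> b + c*(norm (w-v))\<^sup>2"
      using t by (simp add: mult_le_cancel_left_pos)
    then show "a + c*(norm (z-v))\<^sup>2 + (c + \<mu>/2)*(norm (w-z))\<^sup>2 \<le> b + c*(norm (w-v))\<^sup>2 + t * ((c + \<mu>/2)*(norm (w-z))\<^sup>2)"
      by (simp add: field_simps)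
  qed
  then show ?thesis using real fz by simp
next
  case PInf then show ?thesis by simp
next
  case MInf
  have "\<phi> z + ereal (c*(norm (z-v))\<^sup>2) \<le> \<phi> w + ereal (c*(norm (w-v))\<^sup>2)" by (rule zmin)
  then show ?thesis using MInf fz by simp
qed

lemma prox_char:
  fixes \<phi> :: "'a::euclidean_space \<Rightarrow> ereal"
  assumes cl: "closed_e \<phi>" and nm: "\<And>x. \<phi> x \<noteq> -\<infinity>" and x0: "\<phi> x0 = ereal c0"
    and minor: "\<And>x. ereal (inner a x + b) \<le> \<phi> x"
    and sc: "strongly_convex_e \<phi> \<mu>" and mu: "\<mu> \<ge> 0" and gpos: "\<gamma> > 0"
  shows "\<exists>fz. \<phi> (prox \<gamma> \<phi> v) = ereal fz \<and>
     (\<forall>w. \<phi> (prox \<gamma> \<phi> v) + ereal (1 / (2 * \<gamma>) * (norm (prox \<gamma> \<phi> v - v))\<^sup>2)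
          + ereal ((1 / (2 * \<gamma>) + \<mu>/2) * (norm (w - prox \<gamma> \<phi> v))\<^sup>2)
        \<le> \<phi> w + ereal (1 / (2 * \<gamma>) * (norm (w - v))\<^sup>2))"
proof -
  define c where "c = 1 / (2 * \<gamma>)"
  have cpos: "c > 0" using gpos by (simp add: c_def)
  obtain z where zmin: "\<And>w. \<phi> z + ereal (c*(norm (z-v))\<^sup>2) \<le> \<phi> w + ereal (c*(norm (w-v))\<^sup>2)"
    using prox_exists_min[OF cl nm x0 minor cpos] by blast
  have "\<phi> z + ereal (c*(norm (z-v))\<^sup>2) \<le> \<phi> x0 + ereal (c*(norm (x0-v))\<^sup>2)" by (rule zmin)
  then have "\<phi> z \<noteq> \<infinity>" using x0 by auto
  then obtain fz where fz: "\<phi> z = ereal fz" using nm[of z] by (cases "\<phi> z") auto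
  have strong: "\<phi> z + ereal (c*(norm (z-v))\<^sup>2) + ereal ((c + \<mu>/2)*(norm (w-z))\<^sup>2) \<le> \<phi> w + ereal (c*(norm (w-v))\<^sup>2)" for w
    by (rule min_strong[OF sc mu cpos zmin fz])
  have "prox \<gamma> \<phi> v = z"
    unfolding prox_def c_def[symmetric]
  proof (rule the_equality)
    show "\<forall>w. \<phi> z + ereal (c * (norm (z - v))\<^sup>2) \<le> \<phi> w + ereal (c * (norm (w - v))\<^sup>2)"
      using zmin by blast
    fix z' assume z': "\<forall>w. \<phi> z' + ereal (c * (norm (z' - v))\<^sup>2) \<le> \<phi> w + ereal (c * (norm (w - v))\<^sup>2)"
    have a: "\<phi> z' + ereal (c * (norm (z' - v))\<^sup>2) \<le> \<phi> z + ereal (c * (norm (z - v))\<^sup>2)" using z' by blast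
    have b: "\<phi> z + ereal (c*(norm (z-v))\<^sup>2) + ereal ((c + \<mu>/2)*(norm (z'-z))\<^sup>2) \<le> \<phi> z' + ereal (c*(norm (z'-v))\<^sup>2)"
      by (rule strong)
    from a have "\<phi> z' \<noteq> \<infinity>" using fz by auto
    then obtain fz' where fz': "\<phi> z' = ereal fz'" using nm[of z'] by (cases "\<phi> z'") auto
    from a b have "(c + \<mu>/2)*(norm (z'-z))\<^sup>2 \<le> 0" using fz fz' by simp
    moreover have "c + \<mu>/2 > 0" using cpos mu by simp
    ultimately have "(norm (z'-z))\<^sup>2 \<le> 0" by (simp add: mult_le_0_iff)
    then show "z' = z" by simp
  qed
  then show ?thesis using fz strong unfolding c_def by auto
qed




lemma norm_sq_diff_scale:
  fixes a u :: "'a::real_inner"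
  shows "(norm (a - c *\<^sub>R u))\<^sup>2 = (norm a)\<^sup>2 - 2*c*inner u a + c\<^sup>2*(norm u)\<^sup>2"
  unfolding power2_norm_eq_inner by (simp add: inner_diff_left inner_diff_right inner_commute algebra_simps power2_eq_square)

lemma expand_sq_plus:
  fixes q p u :: "'a::real_inner"
  assumes "\<beta> \<noteq> 0"
  shows "\<beta>/2*(norm (q - (p + (1/\<beta>) *\<^sub>R u)))\<^sup>2 = \<beta>/2*(norm (q-p))\<^sup>2 - inner u (q - p) + (norm u)\<^sup>2/(2*\<beta>)"
proof -
  have eq: "q - (p + (1/\<beta>) *\<^sub>R u) = (q - p) - (1/\<beta>) *\<^sub>R u" by (simp add: algebra_simps)
  show ?thesis unfolding eq norm_sq_diff_scale using assms by (simp add: field_simps power2_eq_square)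
qed

lemma expand_sq_minus:
  fixes q p u :: "'a::real_inner"
  assumes "\<beta> \<noteq> 0"
  shows "\<beta>/2*(norm (q - (p - (1/\<beta>) *\<^sub>R u)))\<^sup>2 = \<beta>/2*(norm (q-p))\<^sup>2 + inner u (q - p) + (norm u)\<^sup>2/(2*\<beta>)"
  using expand_sq_plus[OF assms, of q p "-u"] by simp

lemma fconj_props:
  fixes g :: "'a::real_inner \<Rightarrow> ereal"
  assumes "proper_e g"
  shows "\<exists>a b. \<forall>y. ereal (inner a y + b) \<le> fconj g y"
    and "\<And>y. fconj g y \<noteq> -\<infinity>"
    and "closed_e (fconj g)"
proof -
  obtain u0 where "g u0 \<noteq> \<infinity>" "g u0 \<noteq> -\<infinity>" using assms unfolding proper_e_def by blast
  then obtain c where c: "g u0 = ereal c" by (cases "g u0") auto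
  have low: "ereal (inner u0 y + - c) \<le> fconj g y" for y
  proof -
    have "ereal (inner u0 y) - g u0 \<le> fconj g y" unfolding fconj_def by (rule SUP_upper) simp
    then show ?thesis using c by simp
  qed
  then show "\<exists>a b. \<forall>y. ereal (inner a y + b) \<le> fconj g y" by blast
  show "fconj g y \<noteq> -\<infinity>" for y using low[of y] by auto
  have epi: "epigraph_e (fconj g) = (\<Inter>u. {p. ereal (inner u (fst p)) - g u \<le> ereal (snd p)})"
    by (auto simp: epigraph_e_def fconj_def SUP_le_iff)
  have "closed (\<Inter>u. {p::'a\<times>real. ereal (inner u (fst p)) - g u \<le> ereal (snd p)})"
  proof (rule closed_INT, rule ballI)
    fix u :: 'a assume "u \<in> UNIV"
    show "closed {p::'a\<times>real. ereal (inner u (fst p)) - g u \<le> ereal (snd p)}"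
    proof (cases "g u")
      case (real r)
      have "closed {p::'a\<times>real. inner u (fst p) - r \<le> snd p}" by (intro closed_Collect_le continuous_intros)
      moreover have "{p::'a\<times>real. ereal (inner u (fst p)) - g u \<le> ereal (snd p)} = {p. inner u (fst p) - r \<le> snd p}"
        using real by auto
      ultimately show ?thesis by simp
    next
      case PInf then show ?thesis by simp
    next
      case MInf then show ?thesis using assms unfolding proper_e_def by auto
    qed
  qed
  then show "closed_e (fconj g)" by (simp add: closed_e_def epi)
qed

lemma gbeta_char:
  fixes g :: "'a::euclidean_space \<Rightarrow> ereal" and u yd :: 'a
  assumes pg: "proper_e g" and x0: "fconj g x0 = ereal c0"
    and sc: "strongly_convex_e (fconj g) \<mu>" and mu: "\<mu> \<ge> 0" and bpos: "\<beta> > 0"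
  defines "ys \<equiv> prox (1/\<beta>) (fconj g) (yd + (1/\<beta>) *\<^sub>R u)"
  shows "\<exists>H. fconj g ys = ereal H \<and>
     g_beta g \<beta> u yd = ereal (inner u ys - H - \<beta>/2*(norm (ys-yd))\<^sup>2) \<and>
     (\<forall>y Hy. fconj g y = ereal Hy \<longrightarrow>
        inner u y - Hy - \<beta>/2*(norm (y-yd))\<^sup>2 + (\<beta>+\<mu>)/2*(norm (y - ys))\<^sup>2
          \<le> inner u ys - H - \<beta>/2*(norm (ys-yd))\<^sup>2)"
proof -
  obtain a b where minor: "\<And>y. ereal (inner a y + b) \<le> fconj g y" using fconj_props(1)[OF pg] by blast
  have gp: "1/\<beta> > 0" using bpos by simp
  obtain H where H: "fconj g ys = ereal H" and
    tp: "\<And>w. fconj g ys + ereal (1 / (2 * (1/\<beta>)) * (norm (ys - (yd + (1/\<beta>) *\<^sub>R u)))\<^sup>2)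
          + ereal ((1 / (2 * (1/\<beta>)) + \<mu>/2) * (norm (w - ys))\<^sup>2)
        \<le> fconj g w + ereal (1 / (2 * (1/\<beta>)) * (norm (w - (yd + (1/\<beta>) *\<^sub>R u)))\<^sup>2)"
    using prox_char[OF fconj_props(3)[OF pg] fconj_props(2)[OF pg] x0 minor sc mu gp, of "yd + (1/\<beta>) *\<^sub>R u"]
    unfolding ys_def by blast
  have ineq: "inner u y - Hy - \<beta>/2*(norm (y-yd))\<^sup>2 + (\<beta>+\<mu>)/2*(norm (y - ys))\<^sup>2
          \<le> inner u ys - H - \<beta>/2*(norm (ys-yd))\<^sup>2" if Hy: "fconj g y = ereal Hy" for y Hy
  proof -
    have e: "1 / (2 * (1/\<beta>)) = \<beta>/2" by (simp_all add: field_simps)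
    have 1: "H + \<beta>/2 * (norm (ys - (yd + (1/\<beta>) *\<^sub>R u)))\<^sup>2 + (\<beta>/2+\<mu>/2) * (norm (y - ys))\<^sup>2
        \<le> Hy + \<beta>/2 * (norm (y - (yd + (1/\<beta>) *\<^sub>R u)))\<^sup>2"
      using tp[of y] H Hy unfolding e by simp
    have bne: "\<beta> \<noteq> 0" using bpos by simp
    have 2: "(\<beta>/2+\<mu>/2) * (norm (y - ys))\<^sup>2 = (\<beta>+\<mu>)/2*(norm (y - ys))\<^sup>2" by (simp add: field_simps)
    show ?thesis using 1 unfolding expand_sq_plus[OF bne] 2 inner_diff_right by linarith
  qed
  have "g_beta g \<beta> u yd = ereal (inner u ys - H - \<beta>/2*(norm (ys-yd))\<^sup>2)"
    unfolding g_beta_def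
  proof (rule antisym)
    show "(SUP y. ereal (inner u y) - fconj g y - ereal (\<beta> / 2 * (norm (y - yd))\<^sup>2))
        \<le> ereal (inner u ys - H - \<beta>/2*(norm (ys-yd))\<^sup>2)"
    proof (rule SUP_least)
      fix y
      show "ereal (inner u y) - fconj g y - ereal (\<beta> / 2 * (norm (y - yd))\<^sup>2)
          \<le> ereal (inner u ys - H - \<beta>/2*(norm (ys-yd))\<^sup>2)"
      proof (cases "fconj g y")
        case (real Hy)
        have "0 \<le> (\<beta>+\<mu>)/2*(norm (y - ys))\<^sup>2" using bpos mu by simp
        then show ?thesis using ineq[OF real] real by simp
      next
        case PInf then show ?thesis by simp
      next
        case MInf then show ?thesis using fconj_props(2)[OF pg] by simp
      qed
    qed
    show "ereal (inner u ys - H - \<beta>/2*(norm (ys-yd))\<^sup>2)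
        \<le> (SUP y. ereal (inner u y) - fconj g y - ereal (\<beta> / 2 * (norm (y - yd))\<^sup>2))"
      by (rule SUP_upper2[of ys]) (simp_all add: H)
  qed
  with H ineq show ?thesis by blast
qed




lemma quad_form_nonneg:
  fixes e d :: "'a::real_inner"
  assumes A: "A \<ge> 0" and C: "C \<ge> 0" and det: "B\<^sup>2 \<le> A * C"
  shows "0 \<le> A*(norm e)\<^sup>2 - 2*B*inner e d + C*(norm d)\<^sup>2"
proof (cases "A = 0")
  case True
  then have "B = 0" using det by simp
  then show ?thesis using True C by simp
next
  case False
  then have Ap: "A > 0" using A by simp
  have "(norm (A *\<^sub>R e - B *\<^sub>R d))\<^sup>2 = A\<^sup>2*(norm e)\<^sup>2 - 2*A*B*inner e d + B\<^sup>2*(norm d)\<^sup>2"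
    unfolding power2_norm_eq_inner
    by (simp add: inner_diff_left inner_diff_right inner_commute algebra_simps power2_eq_square)
  then have "A*(A*(norm e)\<^sup>2 - 2*B*inner e d + C*(norm d)\<^sup>2) = (norm (A *\<^sub>R e - B *\<^sub>R d))\<^sup>2 + (A*C - B\<^sup>2)*(norm d)\<^sup>2"
    by (simp add: algebra_simps power2_eq_square)
  also have "\<dots> \<ge> 0" using det by simp
  finally show ?thesis using Ap by (simp add: zero_le_mult_iff)
qed

lemma norm_sq_comb:
  fixes e d :: "'a::real_inner"
  shows "(norm (x *\<^sub>R e - y *\<^sub>R d))\<^sup>2 = x\<^sup>2*(norm e)\<^sup>2 - 2*x*y*inner e d + y\<^sup>2*(norm d)\<^sup>2"
  unfolding power2_norm_eq_inner
  by (simp add: inner_diff_left inner_diff_right inner_commute algebra_simps power2_eq_square)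

lemma quad_main:
  fixes P L mf t a :: real and e d :: "'a::real_inner"
  assumes P: "P > 0" and L: "L > 0" and mf: "mf \<ge> 0" and t: "0 < t" "t \<le> 1" and a: "0 < a" "a \<le> 1"
    and c1: "P * (1 - t) * a\<^sup>2 + mf * (1 - t) * t \<ge> L * t\<^sup>2"
    and c2: "P * (L + mf) * t * a\<^sup>2 + (L + mf)\<^sup>2 * t\<^sup>2 \<ge> P * L * a\<^sup>2"
  shows "L * (norm (t *\<^sub>R e - ((1 - a) * a / (a\<^sup>2 + ((L + mf) / P) * t)) *\<^sub>R d))\<^sup>2
           - mf * t * (1 - t) * (norm e)\<^sup>2
         \<le> (1 - t) * P * (norm ((1 - a) *\<^sub>R d - a *\<^sub>R e))\<^sup>2"
proof -
  define Q where "Q = L + mf"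
  define p where "p = P * a\<^sup>2"
  define Dp where "Dp = p + Q * t"
  define z where "z = Q * t\<^sup>2 - (1-t) * p"
  define s where "s = 1 - a"
  define A where "A = (1-t)*p + mf*t*(1-t) - L*t\<^sup>2"
  define G where "G = (1-t)*Dp\<^sup>2 - L*p"
  define \<eta> where "\<eta> = s * a * P / Dp"
  define B where "B = (1-t)*P * s * a - L*t*\<eta>"
  define C where "C = (1-t)*P * s\<^sup>2 - L*\<eta>\<^sup>2"
  have pnn: "p \<ge> 0" using P by (simp add: p_def)
  have Qp: "Q > 0" using L mf by (simp add: Q_def)
  have Dpp: "Dp > 0" using pnn Qp t by (simp add: Dp_def add_nonneg_pos)
  have t1: "t < 1"
  proof (rule ccontr)
    assume "\<not> t < 1" then have "t = 1" using t by simp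
    then show False using c1 L by simp
  qed
  have eta: "(1 - a) * a / (a\<^sup>2 + ((L + mf) / P) * t) = \<eta>"
    unfolding \<eta>_def using P by (simp add: s_def Dp_def p_def Q_def field_simps)
  have A0: "A \<ge> 0" using c1 unfolding A_def p_def by (simp add: algebra_simps)
  have c2': "Q*t*Dp - L*p \<ge> 0" using c2 unfolding Dp_def p_def Q_def by (simp add: algebra_simps power2_eq_square)
  have I1: "A*G - p*((1-t)*Dp - L*t)\<^sup>2 = (mf*t - z)*(mf*Q*t\<^sup>2 - (Q*t - L)*z)"
    unfolding A_def G_def Dp_def z_def Q_def by (simp add: algebra_simps power2_eq_square)
  have I2: "mf*t - z = A" unfolding A_def z_def Q_def by (simp add: algebra_simps power2_eq_square)
  have I3: "mf*Q*t\<^sup>2 - (Q*t - L)*z = (1-t)*(Q*t*Dp - L*p)"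
    unfolding z_def Dp_def Q_def by (simp add: algebra_simps power2_eq_square)
  have fz: "(mf*t - z)*(mf*Q*t\<^sup>2 - (Q*t - L)*z) \<ge> 0"
    unfolding I2 I3 using A0 c2' t1 by simp
  have G0: "G \<ge> 0"
  proof (cases "mf = 0")
    case False
    then have mfp: "mf > 0" using mf by simp
    have I4: "mf*t*(1-t)*G = (mf*t - z)*(mf*Q*t\<^sup>2 - (Q*t - L)*z) + L*(1-t)*z\<^sup>2"
      unfolding G_def Dp_def z_def Q_def by (simp add: algebra_simps power2_eq_square)
    have "L*(1-t)*z\<^sup>2 \<ge> 0" using L t1 by simp
    then have "mf*t*(1-t)*G \<ge> 0" using I4 fz by linarith
    moreover have "mf*t*(1-t) > 0" using mfp t t1 by simp
    ultimately show ?thesis by (simp add: zero_le_mult_iff)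
  next
    case True
    have nz: "-z \<ge> 0" using A0 I2 True by simp
    have "L*(1-t)*z = (1-t)*(Q*t*Dp - L*p)" using I3 True by (simp add: Q_def algebra_simps)
    moreover have "(1-t)*(Q*t*Dp - L*p) \<ge> 0" using c2' t1 by simp
    ultimately have "L*(1-t)*z \<ge> 0" by linarith
    moreover have "L*(1-t) > 0" using L t1 by simp
    ultimately have "z \<ge> 0" by (simp add: zero_le_mult_iff)
    with nz have z0: "z = 0" by simp
    have "(1-t)*G = (Q*t - z)\<^sup>2 - L*(Q*t\<^sup>2 - z)"
      unfolding G_def Dp_def z_def by (simp add: algebra_simps power2_eq_square)
    then have "(1-t)*G = 0" using z0 True by (simp add: Q_def power2_eq_square)
    then show ?thesis using t1 by simp
  qed
  have etaD: "\<eta> * Dp = s * a * P" using Dpp by (simp add: \<eta>_def)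
  have CD: "C * Dp\<^sup>2 = P * s\<^sup>2 * G"
  proof -
    have "C * Dp\<^sup>2 = (1-t)*P * s\<^sup>2 * Dp\<^sup>2 - L*(\<eta>*Dp)\<^sup>2" by (simp add: C_def algebra_simps power2_eq_square)
    also have "\<dots> = P * s\<^sup>2 * G" unfolding etaD G_def p_def by (simp add: algebra_simps power2_eq_square)
    finally show ?thesis .
  qed
  have BD: "B * Dp = P * s * a * ((1-t)*Dp - L*t)"
  proof -
    have "B * Dp = (1-t)*P * s * a * Dp - L*t*(\<eta>*Dp)" by (simp add: B_def algebra_simps)
    also have "\<dots> = P * s * a * ((1-t)*Dp - L*t)" unfolding etaD by (simp add: algebra_simps)
    finally show ?thesis .
  qed
  have D2: "Dp\<^sup>2 > 0" using Dpp by simp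
  have C0: "C \<ge> 0"
  proof -
    have "C * Dp\<^sup>2 \<ge> 0" unfolding CD using P G0 by simp
    then show ?thesis using D2 by (simp add: zero_le_mult_iff)
  qed
  have det: "B\<^sup>2 \<le> A * C"
  proof -
    have "(A*C - B\<^sup>2) * Dp\<^sup>2 = A*(C*Dp\<^sup>2) - (B*Dp)\<^sup>2" by (simp add: algebra_simps power2_eq_square)
    also have "\<dots> = P * s\<^sup>2 * (A*G - p*((1-t)*Dp - L*t)\<^sup>2)" unfolding CD BD p_def
      by (simp add: algebra_simps power2_eq_square)
    also have "\<dots> \<ge> 0" unfolding I1 using fz P by simp
    finally show ?thesis using D2 by (simp add: zero_le_mult_iff)
  qed
  have qf: "0 \<le> A*(norm e)\<^sup>2 - 2*B*inner e d + C*(norm d)\<^sup>2"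
    by (rule quad_form_nonneg[OF A0 C0 det])
  have eq: "(1 - t) * P * (norm ((1 - a) *\<^sub>R d - a *\<^sub>R e))\<^sup>2
      - (L * (norm (t *\<^sub>R e - \<eta> *\<^sub>R d))\<^sup>2 - mf * t * (1 - t) * (norm e)\<^sup>2)
      = A*(norm e)\<^sup>2 - 2*B*inner e d + C*(norm d)\<^sup>2"
  proof -
    have n1: "(norm ((1 - a) *\<^sub>R d - a *\<^sub>R e))\<^sup>2 = a\<^sup>2*(norm e)\<^sup>2 - 2*a*(1-a)*inner e d + (1-a)\<^sup>2*(norm d)\<^sup>2"
      using norm_sq_comb[of a e "1-a" d] by (simp add: norm_minus_commute algebra_simps)
    have ic: "inner d e = inner e d" by (rule inner_commute)
    show ?thesis unfolding n1 norm_sq_comb A_def B_def C_def p_def s_def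
      by (simp add: algebra_simps power2_eq_square ic)
  qed
  show ?thesis unfolding eta using eq qf by linarith
qed




lemma combine:
  fixes fx2 G1 fw Gh ia ih L1 mf Q1 Q2 t i1 iz hyp b1 N G0 b0 fx1 fz Q3 hyt2 hyt1 izt2 izt1 P QQ Qs Qs' a :: real
  assumes P1: "fx2 + G1 \<le> fw + Gh + (ia - ih) + L1/2*Q1 - (L1/2 + mf/2)*Q2"
    and P2: "ia = (1-t)*i1 + t*iz"
    and P3: "Gh = ih - hyp - b1/2*N"
    and P4: "(1-t)*(i1 - hyp - b0/2*N) \<le> (1-t)*G0"
    and P5: "b0 = (1+t)*b1"
    and P6: "fw \<le> (1-t)*fx1 + t*fz - mf/2*t*(1-t)*Q3"
    and P7: "hyt2 \<le> (1-t)*hyt1 + t*hyp"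
    and P8: "izt2 = (1-t)*izt1 + t*iz"
    and P9: "L1*Q1 - mf*t*(1-t)*Q3 \<le> (1-t)*P*QQ"
    and P10: "Q2 = t\<^sup>2*Qs" and P11: "a\<^sup>2*Qs' = QQ"
    and nn: "t\<^sup>2*b1/2*N \<ge> 0"
  shows "fx2 + G1 - (fz + izt2 - hyt2) + (L1+mf)*t\<^sup>2/2*Qs
     \<le> (1-t)*(fx1 + G0 - (fz + izt1 - hyt1) + P*a\<^sup>2/2*Qs')"
proof -
  have P4': "(1-t)*i1 - (1-t)*hyp - (1-t)*b0/2*N \<le> (1-t)*G0" using P4 by (simp add: algebra_simps)
  have e1: "(1-t)*b0/2*N = b1/2*N - t\<^sup>2*b1/2*N" unfolding P5 by (simp add: field_simps power2_eq_square)
  have e2: "(L1/2 + mf/2)*Q2 = (L1+mf)*t\<^sup>2/2*Qs" unfolding P10 by (simp add: algebra_simps)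
  have e3: "(1-t)*(fx1 + G0 - (fz + izt1 - hyt1) + P*a\<^sup>2/2*Qs') = (1-t)*fx1 + (1-t)*G0 - (1-t)*fz - (1-t)*izt1 + (1-t)*hyt1 + (1-t)*P*QQ/2"
    unfolding P11[symmetric] by (simp add: algebra_simps)
  have e4: "mf/2*t*(1-t)*Q3 = (mf*t*(1-t)*Q3)/2" by simp
  have e5: "(1-t)*fz = fz - t*fz" "(1-t)*hyp = hyp - t*hyp" by (simp_all add: algebra_simps)
  show ?thesis unfolding e3 using e5 P1 P2 P3 P4' e1 e2 P6 P7 P8 P9 e4 nn by linarith
qed



lemma smooth_step:
  fixes u1 u2 y' yp yd :: "'a::real_inner" and dx :: "'b::real_normed_vector"
  assumes G1: "G1 = inner u2 y' - H' - b/2*(norm (y'-yd))\<^sup>2"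
    and gap: "inner u1 y' - H' - b/2*(norm (y'-yd))\<^sup>2 + c/2*(norm (y' - yp))\<^sup>2 \<le> Gh"
    and c: "c > 0" and nK: "nK \<ge> 0" and Kb: "norm (u2 - u1) \<le> nK * norm dx"
  shows "G1 \<le> Gh + inner (u2 - u1) yp + nK\<^sup>2/c/2 * (norm dx)\<^sup>2"
proof -
  let ?v = "u2 - u1" and ?r = "y' - yp"
  have 1: "G1 - Gh \<le> inner ?v yp + inner ?v ?r - c/2*(norm ?r)\<^sup>2"
    using G1 gap by (simp add: inner_diff_left inner_diff_right algebra_simps)
  have 2: "inner ?v ?r \<le> (norm ?v)\<^sup>2/(2*c) + c/2*(norm ?r)\<^sup>2"
  proof -
    have "inner ?v ?r \<le> norm ?v * norm ?r" by (rule Cauchy_Schwarz_ineq2[THEN abs_le_D1])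
    moreover have "0 \<le> (norm ?v - c * norm ?r)\<^sup>2" by simp
    then have "2*c*(norm ?v * norm ?r) \<le> (norm ?v)\<^sup>2 + c\<^sup>2*(norm ?r)\<^sup>2"
      by (simp add: power2_eq_square algebra_simps)
    then have "norm ?v * norm ?r \<le> (norm ?v)\<^sup>2/(2*c) + c/2*(norm ?r)\<^sup>2"
      using c by (simp add: field_simps power2_eq_square)
    ultimately show ?thesis by linarith
  qed
  have 3: "(norm ?v)\<^sup>2 \<le> (nK * norm dx)\<^sup>2" using Kb by (intro power_mono) auto
  then have "(norm ?v)\<^sup>2/(2*c) \<le> nK\<^sup>2/c/2 * (norm dx)\<^sup>2"
    using c by (simp add: field_simps power_mult_distrib)
  then show ?thesis using 1 2 by linarith
qed

lemma inner_transpose: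
  fixes K :: "real^'p^'n"
  shows "inner (K *v a) b = inner a (transpose K *v b)"
  using adjoint_works[OF matrix_vector_mul_linear[of K], of a b] by (simp add: adjoint_matrix)

lemma Knz:
  fixes K :: "real^'p^'n"
  assumes "K \<noteq> 0"
  shows "onorm (\<lambda>x. K *v x) > 0"
proof -
  have "\<not> (\<forall>x. K *v x = 0)"
  proof
    assume "\<forall>x. K *v x = 0"
    then have "K = 0" by (simp add: matrix_eq)
    then show False using assms by simp
  qed
  then show ?thesis using onorm_pos_lt[of "\<lambda>x. K *v x"] by simp
qed





theorem lemma3:
  fixes f :: "real^'p \<Rightarrow> ereal" and g :: "real^'n \<Rightarrow> ereal"
    and K :: "real^'p^'n"
    and \<mu>f \<mu>g \<beta>0 :: real and \<tau> :: "nat \<Rightarrow> real" and yd :: "real^'n"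
    and xs xh :: "nat \<Rightarrow> real^'p" and ys yt :: "nat \<Rightarrow> real^'n"
    and k :: nat and x :: "real^'p"
  assumes f: "pcc f" and g: "pcc g" and K: "K \<noteq> 0"
    and muf: "\<mu>f \<ge> 0" "strongly_convex_e f \<mu>f"
    and mug: "\<mu>g \<ge> 0" "strongly_convex_e (fconj g) \<mu>g"
    and beta0: "\<beta>0 > 0"
    and tau: "\<And>j. 0 < \<tau> j \<and> \<tau> j \<le> 1"
    and x0: "xs 0 \<in> dom_e f" and yt0: "yt 0 \<in> dom_e (fconj g)"
    and xh0: "xh 0 = xs 0"
    and y_step: "\<And>j. ys (Suc j) = prox (1 / beta_seq \<beta>0 \<tau> j) (fconj g)
                         (yd + (1 / beta_seq \<beta>0 \<tau> j) *\<^sub>R (K *v xh j))"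
    and x_step: "\<And>j. xs (Suc j) = prox (1 / L_seq K \<beta>0 \<tau> \<mu>g j) f
                         (xh j - (1 / L_seq K \<beta>0 \<tau> \<mu>g j) *\<^sub>R (transpose K *v ys (Suc j)))"
    and xh_step: "\<And>j. xh (Suc j) = xs (Suc j) + eta_seq K \<beta>0 \<tau> \<mu>f \<mu>g j *\<^sub>R (xs (Suc j) - xs j)"
    and yt_step: "\<And>j. yt (Suc j) = (1 - \<tau> j) *\<^sub>R yt j + \<tau> j *\<^sub>R ys (Suc j)"
    and k: "k \<ge> 1"
    and cond1: "(L_seq K \<beta>0 \<tau> \<mu>g (k - 1) + \<mu>f) * (1 - \<tau> k) * (\<tau> (k - 1))\<^sup>2
                 + \<mu>f * (1 - \<tau> k) * \<tau> k \<ge> L_seq K \<beta>0 \<tau> \<mu>g k * (\<tau> k)\<^sup>2"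
    and cond2: "(L_seq K \<beta>0 \<tau> \<mu>g (k - 1) + \<mu>f) * (L_seq K \<beta>0 \<tau> \<mu>g k + \<mu>f) * \<tau> k * (\<tau> (k - 1))\<^sup>2
                 + (L_seq K \<beta>0 \<tau> \<mu>g k + \<mu>f)\<^sup>2 * (\<tau> k)\<^sup>2
                 \<ge> (L_seq K \<beta>0 \<tau> \<mu>g (k - 1) + \<mu>f) * L_seq K \<beta>0 \<tau> \<mu>g k * (\<tau> (k - 1))\<^sup>2"
    and xdom: "x \<in> dom_e f"
  shows "V_fun f g K \<beta>0 \<tau> \<mu>f \<mu>g yd xs yt (Suc k) x
           \<le> ereal (1 - \<tau> k) * V_fun f g K \<beta>0 \<tau> \<mu>f \<mu>g yd xs yt k x"
proof -
  obtain k' where kk: "k = Suc k'" using k by (cases k) auto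
  have pg: "proper_e g" using g by (simp add: pcc_def)
  have pf: "proper_e f" "closed_e f" "convex_e f" using f by (auto simp: pcc_def)
  have fnm: "\<And>x. f x \<noteq> -\<infinity>" using pf(1) by (simp add: proper_e_def)
  have hnm: "\<And>y. fconj g y \<noteq> -\<infinity>" by (rule fconj_props(2)[OF pg])
  obtain cx0 where cx0: "f (xs 0) = ereal cx0"
    using x0 fnm[of "xs 0"] by (cases "f (xs 0)") (auto simp: dom_e_def)
  obtain af bf where fminor: "\<And>x. ereal (inner af x + bf) \<le> f x"
    using affine_minorant[OF pf(3) pf(2) cx0 fnm] by blast
  obtain cy0 where cy0: "fconj g (yt 0) = ereal cy0"
    using yt0 hnm[of "yt 0"] by (cases "fconj g (yt 0)") (auto simp: dom_e_def)
  define nK where "nK = onorm (\<lambda>x. K *v x)"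
  have nKpos: "nK > 0" unfolding nK_def by (rule Knz[OF K])
  have Knorm: "\<And>v. norm (K *v v) \<le> nK * norm v" unfolding nK_def by (rule onorm) simp
  have bpos: "beta_seq \<beta>0 \<tau> j > 0" for j
  proof (induction j)
    case 0 then show ?case using beta0 by simp
  next
    case (Suc j) then show ?case using tau[of "Suc j"] by simp
  qed
  have Ldef: "L_seq K \<beta>0 \<tau> \<mu>g j = nK\<^sup>2 / (beta_seq \<beta>0 \<tau> j + \<mu>g)" for j
    by (simp add: L_seq_def nK_def)
  have Lpos: "L_seq K \<beta>0 \<tau> \<mu>g j > 0" for j
    unfolding Ldef using bpos[of j] mug(1) nKpos by (simp add: add_pos_nonneg)
  have xprox: "\<exists>F. f (xs (Suc j)) = ereal F \<and>
     (\<forall>w. f (xs (Suc j)) + ereal (L_seq K \<beta>0 \<tau> \<mu>g j / 2 * (norm (xs (Suc j) - (xh j - (1 / L_seq K \<beta>0 \<tau> \<mu>g j) *\<^sub>R (transpose K *v ys (Suc j)))))\<^sup>2)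
          + ereal ((L_seq K \<beta>0 \<tau> \<mu>g j / 2 + \<mu>f/2) * (norm (w - xs (Suc j)))\<^sup>2)
        \<le> f w + ereal (L_seq K \<beta>0 \<tau> \<mu>g j / 2 * (norm (w - (xh j - (1 / L_seq K \<beta>0 \<tau> \<mu>g j) *\<^sub>R (transpose K *v ys (Suc j)))))\<^sup>2))" for j
  proof -
    have gp: "1 / L_seq K \<beta>0 \<tau> \<mu>g j > 0" using Lpos[of j] by simp
    have e: "1 / (2 * (1 / L_seq K \<beta>0 \<tau> \<mu>g j)) = L_seq K \<beta>0 \<tau> \<mu>g j / 2" by simp
    show ?thesis
      using prox_char[OF pf(2) fnm cx0 fminor muf(2) muf(1) gp,
          of "xh j - (1 / L_seq K \<beta>0 \<tau> \<mu>g j) *\<^sub>R (transpose K *v ys (Suc j))"]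
      unfolding x_step[of j, symmetric] e by blast
  qed
  have gb: "\<exists>H. fconj g (prox (1/\<beta>) (fconj g) (yd + (1/\<beta>) *\<^sub>R u)) = ereal H \<and>
     g_beta g \<beta> u yd = ereal (inner u (prox (1/\<beta>) (fconj g) (yd + (1/\<beta>) *\<^sub>R u)) - H
         - \<beta>/2*(norm (prox (1/\<beta>) (fconj g) (yd + (1/\<beta>) *\<^sub>R u) - yd))\<^sup>2) \<and>
     (\<forall>y Hy. fconj g y = ereal Hy \<longrightarrow>
        inner u y - Hy - \<beta>/2*(norm (y-yd))\<^sup>2 + (\<beta>+\<mu>g)/2*(norm (y - prox (1/\<beta>) (fconj g) (yd + (1/\<beta>) *\<^sub>R u)))\<^sup>2
          \<le> inner u (prox (1/\<beta>) (fconj g) (yd + (1/\<beta>) *\<^sub>R u)) - H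
             - \<beta>/2*(norm (prox (1/\<beta>) (fconj g) (yd + (1/\<beta>) *\<^sub>R u) - yd))\<^sup>2)"
    if "\<beta> > 0" for \<beta> u
    using gbeta_char[OF pg cy0 mug(2) mug(1) that, of yd u] by simp
  have ytfin: "\<exists>c. fconj g (yt j) = ereal c" for j
  proof (induction j)
    case 0 show ?case using cy0 by blast
  next
    case (Suc j)
    obtain c where c: "fconj g (yt j) = ereal c" using Suc.IH by blast
    obtain H where H: "fconj g (ys (Suc j)) = ereal H"
      using gb[OF bpos[of j], of "K *v xh j"] unfolding y_step[of j, symmetric] by blast
    have "fconj g (yt (Suc j)) \<le> ereal ((1-\<tau> j)*c + \<tau> j*H - \<mu>g/2*\<tau> j*(1-\<tau> j)*(norm (yt j - ys (Suc j)))\<^sup>2)"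
      unfolding yt_step using sconvex_e_ineq[OF mug(2) c H] tau[of j] by auto
    then show ?case using hnm[of "yt (Suc j)"] by (cases "fconj g (yt (Suc j))") auto
  qed
  let ?t = "\<tau> (Suc k')" and ?a = "\<tau> k'"
  let ?b1 = "beta_seq \<beta>0 \<tau> (Suc k')" and ?b0 = "beta_seq \<beta>0 \<tau> k'"
  let ?L1 = "L_seq K \<beta>0 \<tau> \<mu>g (Suc k')" and ?L0 = "L_seq K \<beta>0 \<tau> \<mu>g k'"
  let ?x0 = "xs k'" and ?x1 = "xs (Suc k')" and ?x2 = "xs (Suc (Suc k'))"
  let ?xh = "xh (Suc k')" and ?yp = "ys (Suc (Suc k'))"
  let ?yt1 = "yt (Suc k')" and ?yt2 = "yt (Suc (Suc k'))"
  let ?u = "transpose K *v ?yp"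
  let ?v = "?xh - (1 / ?L1) *\<^sub>R ?u"
  let ?w = "(1 - ?t) *\<^sub>R ?x1 + ?t *\<^sub>R x"
  let ?eta = "eta_seq K \<beta>0 \<tau> \<mu>f \<mu>g k'"
  have t: "0 < ?t" "?t \<le> 1" using tau by auto
  have a: "0 < ?a" "?a \<le> 1" using tau by auto
  obtain fx1 where fx1: "f ?x1 = ereal fx1" using xprox[of k'] by blast
  obtain fx2 where fx2: "f ?x2 = ereal fx2" and
    tp2: "\<And>w. f ?x2 + ereal (?L1 / 2 * (norm (?x2 - ?v))\<^sup>2) + ereal ((?L1 / 2 + \<mu>f/2) * (norm (w - ?x2))\<^sup>2)
        \<le> f w + ereal (?L1 / 2 * (norm (w - ?v))\<^sup>2)"
    using xprox[of "Suc k'"] by blast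
  obtain fz where fz: "f x = ereal fz" using xdom fnm[of x] by (cases "f x") (auto simp: dom_e_def)
  have fwle: "f ?w \<le> ereal ((1-?t)*fx1 + ?t*fz - \<mu>f/2*?t*(1-?t)*(norm (?x1 - x))\<^sup>2)"
    using sconvex_e_ineq[OF muf(2) fx1 fz] t by simp
  then obtain fw where fw: "f ?w = ereal fw" using fnm[of ?w] by (cases "f ?w") auto
  have P6: "fw \<le> (1-?t)*fx1 + ?t*fz - \<mu>f/2*?t*(1-?t)*(norm (?x1 - x))\<^sup>2" using fwle fw by simp
  have L1ne: "?L1 \<noteq> 0" using Lpos[of "Suc k'"] by simp
  have R1: "fx2 + ?L1/2*(norm (?x2 - ?xh))\<^sup>2 + inner ?u (?x2 - ?xh) + (?L1 / 2 + \<mu>f/2) * (norm (?w - ?x2))\<^sup>2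
      \<le> fw + ?L1/2*(norm (?w - ?xh))\<^sup>2 + inner ?u (?w - ?xh)"
    using tp2[of ?w] fx2 fw unfolding expand_sq_minus[OF L1ne] by simp
  have ypdef: "?yp = prox (1/?b1) (fconj g) (yd + (1/?b1) *\<^sub>R (K *v ?xh))" by (rule y_step)
  obtain hyp where hyp: "fconj g ?yp = ereal hyp" and
    Gh: "g_beta g ?b1 (K *v ?xh) yd = ereal (inner (K *v ?xh) ?yp - hyp - ?b1/2*(norm (?yp - yd))\<^sup>2)" and
    gapall: "\<And>y Hy. fconj g y = ereal Hy \<Longrightarrow>
        inner (K *v ?xh) y - Hy - ?b1/2*(norm (y-yd))\<^sup>2 + (?b1+\<mu>g)/2*(norm (y - ?yp))\<^sup>2
          \<le> inner (K *v ?xh) ?yp - hyp - ?b1/2*(norm (?yp - yd))\<^sup>2"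
    using gb[OF bpos[of "Suc k'"], of "K *v ?xh"] unfolding ypdef[symmetric] by blast
  let ?y' = "prox (1/?b1) (fconj g) (yd + (1/?b1) *\<^sub>R (K *v ?x2))"
  obtain H' where H': "fconj g ?y' = ereal H'" and
    G1: "g_beta g ?b1 (K *v ?x2) yd = ereal (inner (K *v ?x2) ?y' - H' - ?b1/2*(norm (?y' - yd))\<^sup>2)"
    using gb[OF bpos[of "Suc k'"], of "K *v ?x2"] by blast
  define G1v where "G1v = inner (K *v ?x2) ?y' - H' - ?b1/2*(norm (?y' - yd))\<^sup>2"
  define Ghv where "Ghv = inner (K *v ?xh) ?yp - hyp - ?b1/2*(norm (?yp - yd))\<^sup>2"
  have smooth: "G1v \<le> Ghv + inner (K *v ?x2 - K *v ?xh) ?yp + nK\<^sup>2/(?b1+\<mu>g)/2 * (norm (?x2 - ?xh))\<^sup>2"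
  proof (rule smooth_step[OF G1v_def])
    show "inner (K *v ?xh) ?y' - H' - ?b1/2*(norm (?y'-yd))\<^sup>2 + (?b1+\<mu>g)/2*(norm (?y' - ?yp))\<^sup>2 \<le> Ghv"
      unfolding Ghv_def by (rule gapall[OF H'])
    show "?b1 + \<mu>g > 0" using bpos[of "Suc k'"] mug(1) by simp
    show "nK \<ge> 0" using nKpos by simp
    show "norm (K *v ?x2 - K *v ?xh) \<le> nK * norm (?x2 - ?xh)"
      using Knorm[of "?x2 - ?xh"] by (simp add: matrix_vector_mult_diff_distrib)
  qed
  have L1eq: "nK\<^sup>2/(?b1+\<mu>g) = ?L1" by (simp add: Ldef)
  have innK: "inner (K *v ?x2 - K *v ?xh) ?yp = inner ?u (?x2 - ?xh)"
  proof -
    have "inner (K *v ?x2 - K *v ?xh) ?yp = inner (K *v (?x2 - ?xh)) ?yp"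
      by (simp only: matrix_vector_mult_diff_distrib)
    also have "\<dots> = inner (?x2 - ?xh) ?u" by (rule inner_transpose)
    also have "\<dots> = inner ?u (?x2 - ?xh)" by (rule inner_commute)
    finally show ?thesis .
  qed
  have P1: "fx2 + G1v \<le> fw + Ghv + ((inner ?u (?w - ?xh) + inner (K *v ?xh) ?yp) - inner (K *v ?xh) ?yp)
      + ?L1/2*(norm (?w - ?xh))\<^sup>2 - (?L1 / 2 + \<mu>f/2) * (norm (?w - ?x2))\<^sup>2"
    using R1 smooth unfolding L1eq innK by simp
  have P2: "inner ?u (?w - ?xh) + inner (K *v ?xh) ?yp = (1-?t)*inner (K *v ?x1) ?yp + ?t*inner (K *v x) ?yp"
  proof -
    have "inner ?u (?w - ?xh) = inner (?w - ?xh) ?u" by (rule inner_commute)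
    also have "\<dots> = inner (K *v (?w - ?xh)) ?yp" by (rule inner_transpose[symmetric])
    also have "\<dots> = (1-?t)*inner (K *v ?x1) ?yp + ?t*inner (K *v x) ?yp - inner (K *v ?xh) ?yp"
      by (simp add: matrix_vector_mult_diff_distrib matrix_vector_right_distrib matrix_vector_mult_scaleR
          inner_diff_left inner_add_left)
    finally show ?thesis by simp
  qed
  obtain G0v where G0: "g_beta g ?b0 (K *v ?x1) yd = ereal G0v" and
    gap0: "\<And>y Hy. fconj g y = ereal Hy \<Longrightarrow>
        inner (K *v ?x1) y - Hy - ?b0/2*(norm (y-yd))\<^sup>2 + (?b0+\<mu>g)/2*(norm (y - prox (1/?b0) (fconj g) (yd + (1/?b0) *\<^sub>R (K *v ?x1))))\<^sup>2
          \<le> G0v"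
    using gb[OF bpos[of k'], of "K *v ?x1"] by blast
  have P4a: "inner (K *v ?x1) ?yp - hyp - ?b0/2*(norm (?yp-yd))\<^sup>2 \<le> G0v"
  proof -
    have "0 \<le> (?b0+\<mu>g)/2*(norm (?yp - prox (1/?b0) (fconj g) (yd + (1/?b0) *\<^sub>R (K *v ?x1))))\<^sup>2"
      using bpos[of k'] mug(1) by simp
    then show ?thesis using gap0[OF hyp] by linarith
  qed
  have P4: "(1-?t)*(inner (K *v ?x1) ?yp - hyp - ?b0/2*(norm (?yp-yd))\<^sup>2) \<le> (1-?t)*G0v"
    using P4a t by (intro mult_left_mono) auto
  have P5: "?b0 = (1+?t)*?b1" using t by simp
  obtain hyt1 where hyt1: "fconj g ?yt1 = ereal hyt1" using ytfin by blast
  have hyt2le: "fconj g ?yt2 \<le> ereal ((1-?t)*hyt1 + ?t*hyp - \<mu>g/2*?t*(1-?t)*(norm (?yt1 - ?yp))\<^sup>2)"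
    unfolding yt_step[of "Suc k'"] using sconvex_e_ineq[OF mug(2) hyt1 hyp] t by auto
  then obtain hyt2 where hyt2: "fconj g ?yt2 = ereal hyt2" using hnm[of ?yt2] by (cases "fconj g ?yt2") auto
  have P7: "hyt2 \<le> (1-?t)*hyt1 + ?t*hyp"
  proof -
    have "0 \<le> \<mu>g/2*?t*(1-?t)*(norm (?yt1 - ?yp))\<^sup>2" using mug(1) t by simp
    then show ?thesis using hyt2le hyt2 by simp
  qed
  have P8: "inner (K *v x) ?yt2 = (1-?t)*inner (K *v x) ?yt1 + ?t*inner (K *v x) ?yp"
    unfolding yt_step[of "Suc k'"] by (simp add: inner_add_right)
  let ?e = "x - ?x1" and ?d = "?x1 - ?x0"
  have xhdef: "?xh = ?x1 + ?eta *\<^sub>R (?x1 - ?x0)" by (rule xh_step)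
  have wxh: "?w - ?xh = ?t *\<^sub>R ?e - ?eta *\<^sub>R ?d" unfolding xhdef by (simp add: algebra_simps)
  have etaeq: "?eta = (1 - ?a) * ?a / (?a\<^sup>2 + ((?L1 + \<mu>f) / (?L0 + \<mu>f)) * ?t)"
    by (simp add: eta_seq_def Let_def)
  have P0: "?L0 + \<mu>f > 0" using Lpos[of k'] muf(1) by simp
  have P9: "?L1*(norm (?w - ?xh))\<^sup>2 - \<mu>f*?t*(1-?t)*(norm (?x1 - x))\<^sup>2
      \<le> (1-?t)*(?L0 + \<mu>f)*(norm ((1 - ?a) *\<^sub>R ?d - ?a *\<^sub>R ?e))\<^sup>2"
  proof -
    have c1': "(?L0 + \<mu>f) * (1 - ?t) * ?a\<^sup>2 + \<mu>f * (1 - ?t) * ?t \<ge> ?L1 * ?t\<^sup>2"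
      using cond1 unfolding kk by simp
    have c2': "(?L0 + \<mu>f) * (?L1 + \<mu>f) * ?t * ?a\<^sup>2 + (?L1 + \<mu>f)\<^sup>2 * ?t\<^sup>2 \<ge> (?L0 + \<mu>f) * ?L1 * ?a\<^sup>2"
      using cond2 unfolding kk by simp
    have "norm (?x1 - x) = norm ?e" by (rule norm_minus_commute)
    then show ?thesis unfolding wxh etaeq
      using quad_main[OF P0 Lpos[of "Suc k'"] muf(1) t a c1' c2', of ?e ?d] by simp
  qed
  let ?s = "(1 / ?t) *\<^sub>R (?x2 - (1 - ?t) *\<^sub>R ?x1)"
  let ?s' = "(1 / ?a) *\<^sub>R (?x1 - (1 - ?a) *\<^sub>R ?x0)"
  have P10: "(norm (?w - ?x2))\<^sup>2 = ?t\<^sup>2*(norm (?s - x))\<^sup>2"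
  proof -
    have "?w - ?x2 = - (?t *\<^sub>R (?s - x))" using t by (simp add: algebra_simps)
    then show ?thesis by (simp add: power_mult_distrib)
  qed
  have P11: "?a\<^sup>2*(norm (?s' - x))\<^sup>2 = (norm ((1 - ?a) *\<^sub>R ?d - ?a *\<^sub>R ?e))\<^sup>2"
  proof -
    have "(1 - ?a) *\<^sub>R ?d - ?a *\<^sub>R ?e = ?a *\<^sub>R (?s' - x)" using a by (simp add: algebra_simps)
    then show ?thesis by (simp add: power_mult_distrib)
  qed
  have nn: "?t\<^sup>2*?b1/2*(norm (?yp - yd))\<^sup>2 \<ge> 0" using bpos[of "Suc k'"] by (simp del: beta_seq.simps)
  have main: "fx2 + G1v - (fz + inner (K *v x) ?yt2 - hyt2) + (?L1+\<mu>f)*?t\<^sup>2/2*(norm (?s - x))\<^sup>2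
     \<le> (1-?t)*(fx1 + G0v - (fz + inner (K *v x) ?yt1 - hyt1) + (?L0 + \<mu>f)*?a\<^sup>2/2*(norm (?s' - x))\<^sup>2)"
    by (rule combine[OF P1 P2 Ghv_def P4 P5 P6 P7 P8 P9 P10 P11 nn])
  show ?thesis
    unfolding kk V_fun_def F_beta_def lagr_def
    using main fx2 G1 G1v_def fz hyt2 fx1 G0 hyt1 by simp
qed


end
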